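(* Let $G$ and $H$ be two connected nontrivial graphs and $S\subseteq V(G\Box H)$. If $V(G^h)\cup V({}^gH)\subseteq\langle S\rangle_C$ for some $g\in V(G)$ and $h\in V(H)$, then $S$ is a cycle hull set of $G\Box H$.
   Context: All graphs are finite, simple and undirected. For a graph $G$ and $S\subseteq V(G)$, the cycle interval $\langle S\rangle$ consists of the vertices of $S$ together with every vertex $w\in V(G)\setminus S$ such that $G[S\cup\{w\}]$ contains a cycle through $w$; $S$ is cycle convex if $\langle S\rangle=S$; the cycle convex hull $\langle S\rangle_C$ is the smallest cycle convex set containing $S$; $S$ is a cycle hull set if $\langle S\rangle_C$ is the whole vertex set. The Cartesian product $G\Box H$ has vertex set $V(G)\times V(H)$, with $(g_1,h_1)\sim(g_2,h_2)$ iff ($g_1\sim g_2$ and $h_1=h_2$) or ($g_1=g_2$ and $h_1\sim h_2$). For $h\in V(H)$, $G^h$ is the subgraph induced by $V(G)\times\{h\}$; for $g\in V(G)$, ${}^gH$ is the subgraph induced by $\{g\}\times V(H)$. A graph is nontrivial if it has at least two vertices. *)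

theory Defs
  imports Main
begin

definition graph :: "'a set \<Rightarrow> ('a \<Rightarrow> 'a \<Rightarrow> bool) \<Rightarrow> bool" where
  "graph V E \<longleftrightarrow> finite V \<and> (\<forall>x y. E x y \<longrightarrow> x \<in> V \<and> y \<in> V)
     \<and> (\<forall>x y. E x y \<longrightarrow> E y x) \<and> (\<forall>x. \<not> E x x)"

definition connected_graph :: "'a set \<Rightarrow> ('a \<Rightarrow> 'a \<Rightarrow> bool) \<Rightarrow> bool" where
  "connected_graph V E \<longleftrightarrow> V \<noteq> {} \<and> (\<forall>x\<in>V. \<forall>y\<in>V. E\<^sup>*\<^sup>* x y)"

definition nontrivial_graph :: "'a set \<Rightarrow> bool" where
  "nontrivial_graph V \<longleftrightarrow> card V \<ge> 2"

definition is_cycle_in :: "('a \<Rightarrow> 'a \<Rightarrow> bool) \<Rightarrow> 'a set \<Rightarrow> 'a list \<Rightarrow> bool" where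
  "is_cycle_in E A c \<longleftrightarrow> length c \<ge> 3 \<and> distinct c \<and> set c \<subseteq> A
     \<and> (\<forall>i. Suc i < length c \<longrightarrow> E (c ! i) (c ! Suc i))
     \<and> E (last c) (hd c)"

definition cycle_interval :: "'a set \<Rightarrow> ('a \<Rightarrow> 'a \<Rightarrow> bool) \<Rightarrow> 'a set \<Rightarrow> 'a set" where
  "cycle_interval V E S = S \<union> {w \<in> V - S. \<exists>c. is_cycle_in E (S \<union> {w}) c \<and> w \<in> set c}"

definition cycle_convex :: "'a set \<Rightarrow> ('a \<Rightarrow> 'a \<Rightarrow> bool) \<Rightarrow> 'a set \<Rightarrow> bool" where
  "cycle_convex V E S \<longleftrightarrow> S \<subseteq> V \<and> cycle_interval V E S = S"

definition cycle_hull :: "'a set \<Rightarrow> ('a \<Rightarrow> 'a \<Rightarrow> bool) \<Rightarrow> 'a set \<Rightarrow> 'a set" where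
  "cycle_hull V E S = \<Inter> {T. S \<subseteq> T \<and> cycle_convex V E T}"

definition cycle_hull_set :: "'a set \<Rightarrow> ('a \<Rightarrow> 'a \<Rightarrow> bool) \<Rightarrow> 'a set \<Rightarrow> bool" where
  "cycle_hull_set V E S \<longleftrightarrow> cycle_hull V E S = V"

definition cart_vertices :: "'a set \<Rightarrow> 'b set \<Rightarrow> ('a \<times> 'b) set" where
  "cart_vertices VG VH = VG \<times> VH"

definition cart_edges :: "('a \<Rightarrow> 'a \<Rightarrow> bool) \<Rightarrow> ('b \<Rightarrow> 'b \<Rightarrow> bool) \<Rightarrow> ('a \<times> 'b) \<Rightarrow> ('a \<times> 'b) \<Rightarrow> bool" where
  "cart_edges EG EH p q \<longleftrightarrow>
     (EG (fst p) (fst q) \<and> snd p = snd q) \<or> (fst p = fst q \<and> EH (snd p) (snd q))"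

definition G_layer :: "'a set \<Rightarrow> 'b \<Rightarrow> ('a \<times> 'b) set" where
  "G_layer VG h = VG \<times> {h}"

definition H_layer :: "'a \<Rightarrow> 'b set \<Rightarrow> ('a \<times> 'b) set" where
  "H_layer g VH = {g} \<times> VH"

end

theory Submission
  imports Defs
begin

lemma hull_sub: "S \<subseteq> V \<Longrightarrow> cycle_hull V E S \<subseteq> V"
proof -
  assume "S \<subseteq> V"
  have "cycle_convex V E V" unfolding cycle_convex_def cycle_interval_def by auto
  with \<open>S \<subseteq> V\<close> show ?thesis unfolding cycle_hull_def by blast
qed

lemma hull_closed:
  assumes "w \<in> V" "is_cycle_in E (cycle_hull V E S \<union> {w}) c" "w \<in> set c"
  shows "w \<in> cycle_hull V E S"
  unfolding cycle_hull_def
proof (rule InterI)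
  fix T assume "T \<in> {T. S \<subseteq> T \<and> cycle_convex V E T}"
  hence T: "S \<subseteq> T" "cycle_convex V E T" by auto
  have "cycle_hull V E S \<subseteq> T" using T unfolding cycle_hull_def by blast
  hence "is_cycle_in E (T \<union> {w}) c" using assms(2) unfolding is_cycle_in_def by blast
  hence "w \<in> cycle_interval V E T" using assms unfolding cycle_interval_def by blast
  thus "w \<in> T" using T(2) unfolding cycle_convex_def by blast
qed

lemma square:
  assumes gr: "graph VG EG" "graph VH EH"
    and e1: "EG a b" and e2: "EH c d"
    and in1: "(a,c) \<in> cycle_hull (cart_vertices VG VH) (cart_edges EG EH) S"
    and in2: "(a,d) \<in> cycle_hull (cart_vertices VG VH) (cart_edges EG EH) S"
    and in3: "(b,c) \<in> cycle_hull (cart_vertices VG VH) (cart_edges EG EH) S"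
  shows "(b,d) \<in> cycle_hull (cart_vertices VG VH) (cart_edges EG EH) S"
proof -
  have ab: "a \<noteq> b" "b \<in> VG" "EG b a" using gr(1) e1 unfolding graph_def by metis+
  have cd: "c \<noteq> d" "d \<in> VH" "EH d c" using gr(2) e2 unfolding graph_def by metis+
  let ?c = "[(a,c),(a,d),(b,d),(b,c)]"
  have "is_cycle_in (cart_edges EG EH)
     (cycle_hull (cart_vertices VG VH) (cart_edges EG EH) S \<union> {(b,d)}) ?c"
    unfolding is_cycle_in_def
  proof (intro conjI allI impI)
    fix i assume "Suc i < length ?c"
    hence "i = 0 \<or> i = 1 \<or> i = 2" by auto
    thus "cart_edges EG EH (?c ! i) (?c ! Suc i)"
      using e1 e2 ab cd unfolding cart_edges_def by auto
  qed (use ab cd in1 in2 in3 e1 e2 in \<open>auto simp: cart_edges_def\<close>)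
  thus ?thesis using ab cd by (intro hull_closed) (auto simp: cart_vertices_def)
qed

theorem mainTheorem6:
  fixes VG :: "'a set" and EG :: "'a \<Rightarrow> 'a \<Rightarrow> bool"
    and VH :: "'b set" and EH :: "'b \<Rightarrow> 'b \<Rightarrow> bool"
    and S :: "('a \<times> 'b) set"
  assumes "graph VG EG" and "graph VH EH"
    and "connected_graph VG EG" and "connected_graph VH EH"
    and "nontrivial_graph VG" and "nontrivial_graph VH"
    and "S \<subseteq> cart_vertices VG VH"
    and "g \<in> VG" and "h \<in> VH"
    and "G_layer VG h \<union> H_layer g VH \<subseteq> cycle_hull (cart_vertices VG VH) (cart_edges EG EH) S"
  shows "cycle_hull_set (cart_vertices VG VH) (cart_edges EG EH) S"
proof -
  let ?C = "cycle_hull (cart_vertices VG VH) (cart_edges EG EH) S"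
  have lay: "\<And>x. x \<in> VG \<Longrightarrow> (x,h) \<in> ?C" "\<And>y. y \<in> VH \<Longrightarrow> (g,y) \<in> ?C"
    using assms(10) unfolding G_layer_def H_layer_def by auto
  have col: "(b,y) \<in> ?C"
    if ab: "EG a b" and ca: "\<forall>y\<in>VH. (a,y) \<in> ?C" and y: "EH\<^sup>*\<^sup>* h y" for a b y
    using y
  proof (induction rule: rtranclp_induct)
    case base
    have "b \<in> VG" using ab assms(1) unfolding graph_def by blast
    then show ?case using lay by blast
  next
    case (step y z)
    have "y \<in> VH" "z \<in> VH" using step(2) assms(2) unfolding graph_def by blast+
    then show ?case using square[OF assms(1,2) ab step(2)] ca step(3) by blast
  qed
  have main: "\<forall>y\<in>VH. (x,y) \<in> ?C" if "EG\<^sup>*\<^sup>* g x" for x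
    using that
  proof (induction rule: rtranclp_induct)
    case base then show ?case using lay by blast
  next
    case (step x x')
    show ?case
    proof
      fix y assume "y \<in> VH"
      hence "EH\<^sup>*\<^sup>* h y" using assms(4,9) unfolding connected_graph_def by blast
      thus "(x',y) \<in> ?C" using col[OF step(2) step(3)] by blast
    qed
  qed
  have "cart_vertices VG VH \<subseteq> ?C"
  proof
    fix p assume "p \<in> cart_vertices VG VH"
    then obtain x y where p: "p = (x,y)" "x \<in> VG" "y \<in> VH" unfolding cart_vertices_def by auto
    hence "EG\<^sup>*\<^sup>* g x" using assms(3,8) unfolding connected_graph_def by blast
    thus "p \<in> ?C" using main p by blast
  qed
  with hull_sub[OF assms(7)] show ?thesis unfolding cycle_hull_set_def by blast
qed

end
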